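(* Let $A_1,B_1,C_1,A_2,B_2,C_2$ be real matrices of dimensions $n_1\times n_1$, $n_1\times p_1$, $m\times n_1$, $n_2\times n_2$, $n_2\times p_2$, $m\times n_2$. Let $K\in\mathbb{R}^{p_1\times n_1}$ with $A_1+B_1K$ Hurwitz, $M$ symmetric positive definite and $\lambda>0$ with $M\ge C_1^TC_1$ and $(A_1+B_1K)^TM+M(A_1+B_1K)\le-2\lambda M$, and $P\in\mathbb{R}^{n_1\times n_2}$, $Q\in\mathbb{R}^{p_1\times n_2}$ with $PA_2=A_1P+B_1Q$, $C_2=C_1P$; let $R\in\mathbb{R}^{p_1\times p_2}$ be arbitrary. Define $\mathcal{V}(\mathbf{x}_1,\mathbf{x}_2)=\sqrt{(\mathbf{x}_1-P\mathbf{x}_2)^TM(\mathbf{x}_1-P\mathbf{x}_2)}$, $u_{\mathcal{V}}(\mathbf{u}_2,\mathbf{x}_1,\mathbf{x}_2)=R\mathbf{u}_2+Q\mathbf{x}_2+K(\mathbf{x}_1-P\mathbf{x}_2)$, and $\gamma(\nu)=\frac{\|\sqrt{M}(B_1R-PB_2)\|}{\lambda}\nu$. Let $\mathbf{u}_2(\cdot)$ be a smooth, bounded input with trajectory $\mathbf{x}_2(t)$ of $\dot{\mathbf{x}}_2=A_2\mathbf{x}_2+B_2\mathbf{u}_2$ and output $\mathbf{y}_2=C_2\mathbf{x}_2$. Let the disturbance be a single unit impulse $d(t)=\delta(t-t_i)$ at a time $t_i>0$, entering through an unknown vector $B_d\in\mathbb{R}^{n_1}$ with $\|B_d\|<b_{max}$,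 and let $\mathbf{x}_1(t)$ be a trajectory of $\dot{\mathbf{x}}_1=A_1\mathbf{x}_1+B_1u_{\mathcal{V}}(\mathbf{u}_2,\mathbf{x}_1,\mathbf{x}_2)+B_d d$, i.e. $\mathbf{x}_1$ solves this ODE with $d=0$ on $[0,t_i)$ and on $(t_i,\infty)$ and jumps as $\mathbf{x}_1(t_i^+)=\mathbf{x}_1(t_i^-)+B_d$; let $\mathbf{y}_1=C_1\mathbf{x}_1$. Then for all $t\ge0$ (at $t=t_i$ for both one-sided limits), $$\|\mathbf{y}_1(t)-\mathbf{y}_2(t)\|\le\max\big\{\mathcal{V}(\mathbf{x}_1(0),\mathbf{x}_2(0)),\ \gamma(\|\mathbf{u}_2\|_\infty)\big\}+b_{max}\sqrt{\lambda_{max}},$$ where $\lambda_{max}$ is the largest eigenvalue of $M$.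
   Context: Vector norms are Euclidean; for a matrix $A$, $\|A\|$ is the induced 2-norm; $\sqrt{M}$ is the symmetric positive definite square root of $M$; $\le$ between symmetric matrices is the Loewner order; $\|\mathbf{u}_2\|_\infty=\sup_{t\ge0}\|\mathbf{u}_2(t)\|$; $\delta$ is the Dirac delta. *)

theory Defs
  imports "HOL-Analysis.Analysis"
begin

text \<open>Conventions: a p x q real matrix is of type real^'q^'p (rows indexed by 'p).
 Vector norms are Euclidean (the norm on real^'n).\<close>

definition sym_mat :: "real^'n^'n \<Rightarrow> bool" where
  "sym_mat M \<longleftrightarrow> transpose M = M"

definition pos_def :: "real^'n^'n \<Rightarrow> bool" where
  "pos_def M \<longleftrightarrow> sym_mat M \<and> (\<forall>x. x \<noteq> 0 \<longrightarrow> x \<bullet> (M *v x) > 0)"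

definition loewner_le :: "real^'n^'n \<Rightarrow> real^'n^'n \<Rightarrow> bool" where
  "loewner_le N M \<longleftrightarrow> (\<forall>x. x \<bullet> (N *v x) \<le> x \<bullet> (M *v x))"

definition hurwitz :: "real^'n^'n \<Rightarrow> bool" where
  "hurwitz A \<longleftrightarrow>
     (\<forall>z::complex. det (mat z - (\<chi> i j. complex_of_real (A $ i $ j))) = 0 \<longrightarrow> Re z < 0)"

definition mat_norm :: "real^'n^'m \<Rightarrow> real" where
  "mat_norm A = onorm (\<lambda>x. A *v x)"

definition mat_sqrt :: "real^'n^'n \<Rightarrow> real^'n^'n" where
  "mat_sqrt M = (THE S. pos_def S \<and> S ** S = M)"

definition max_eig :: "real^'n^'n \<Rightarrow> real" where
  "max_eig M = Max {l. \<exists>v. v \<noteq> 0 \<and> M *v v = l *\<^sub>R v}"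

definition smooth_nonneg :: "(real \<Rightarrow> 'a::real_normed_vector) \<Rightarrow> bool" where
  "smooth_nonneg u \<longleftrightarrow> (\<exists>D :: nat \<Rightarrow> real \<Rightarrow> 'a. D 0 = u \<and>
     (\<forall>k t. t \<ge> 0 \<longrightarrow> (D k has_vector_derivative D (Suc k) t) (at t within {0..})))"

definition sup_norm :: "(real \<Rightarrow> 'a::real_normed_vector) \<Rightarrow> real" where
  "sup_norm u = (SUP t\<in>{0..}. norm (u t))"

end

theory Submission
  imports Defs
begin

lemma sym_dot: "sym_mat M \<Longrightarrow> (M *v x) \<bullet> y = x \<bullet> (M *v y)"
  by (metis dot_lmul_matrix inner_commute sym_mat_def transpose_matrix_vector)

lemma quad_zero:
  fixes a c :: real
  assumes "a \<ge> 0" "\<And>t. t^2 * c \<le> 2 * t * a"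
  shows "a = 0"
proof (rule ccontr)
  assume "a \<noteq> 0" then have a: "a > 0" using assms by simp
  define s where "s = a / (\<bar>c\<bar> + 1)"
  have s: "s > 0" using a by (simp add: s_def)
  have "s^2 * c \<le> 2 * (-s) * a" using assms(2)[of "-s"] by simp
  then have "s * (s * c) \<le> s * (-2 * a)" by (simp add: power2_eq_square algebra_simps)
  then have "s * c \<le> -2 * a" using s by (simp only: mult_le_cancel_left_pos)
  moreover have "s * c \<ge> - (s * \<bar>c\<bar>)" using s by (smt (verit) abs_ge_minus_self mult_left_mono mult_minus_right)
  moreover have "s * \<bar>c\<bar> < a" using a by (simp add: s_def field_simps)
  ultimately show False using a by linarith
qed

lemma arith_aux: "(A::real) \<le> l * B \<Longrightarrow> A = l + 2 * t * p + t^2 * q \<Longrightarrow> B = 1 + 2 * t * r + t^2 * s \<Longrightarrow> p - l * r = - s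
  \<Longrightarrow> t^2 * (q - l * s) \<le> 2 * t * s"
proof -
  assume a: "A \<le> l * B" "A = l + 2 * t * p + t^2 * q" "B = 1 + 2 * t * r + t^2 * s" "p - l * r = - s"
  then have "p = l * r - s" by simp
  with a show ?thesis by (simp add: algebra_simps)
qed

lemma eig_exists:
  fixes M :: "real^'n^'n"
  assumes sym: "sym_mat M" and U: "subspace U" and inv: "\<And>x. x \<in> U \<Longrightarrow> M *v x \<in> U"
    and ne: "U \<noteq> {0}"
  shows "\<exists>v\<in>U. norm v = 1 \<and> (\<exists>l. M *v v = l *\<^sub>R v)"
proof -
  define S where "S = U \<inter> sphere 0 1"
  have cS: "compact S" unfolding S_def
    using compact_Int_closed[OF compact_sphere closed_subspace[OF U]] by (simp add: Int_commute)
  obtain x where x: "x \<in> U" "x \<noteq> 0" using ne U subspace_0 by blast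
  have "(1 / norm x) *\<^sub>R x \<in> S" using x U by (simp add: S_def subspace_scale)
  then have Sne: "S \<noteq> {}" by blast
  have "continuous_on S (\<lambda>x. x \<bullet> (M *v x))"
    by (intro continuous_intros linear_continuous_on matrix_vector_mul_linear)
  then obtain v where v: "v \<in> S" and vmax: "\<And>y. y \<in> S \<Longrightarrow> y \<bullet> (M *v y) \<le> v \<bullet> (M *v v)"
    using continuous_attains_sup[OF cS Sne] by blast
  define l where "l = v \<bullet> (M *v v)"
  have vU: "v \<in> U" and nv: "norm v = 1" using v by (auto simp: S_def)
  have vv: "v \<bullet> v = 1" using nv by (simp add: norm_eq_1)
  have ray: "y \<bullet> (M *v y) \<le> l * (y \<bullet> y)" if y: "y \<in> U" for y
  proof (cases "y = 0")
    case True then show ?thesis by simp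
  next
    case False
    have "(1 / norm y) *\<^sub>R y \<in> S" using y U False by (simp add: S_def subspace_scale)
    from vmax[OF this] have "(1 / norm y)^2 * (y \<bullet> (M *v y)) \<le> l"
      by (simp add: l_def matrix_vector_mult_scaleR power2_eq_square mult.assoc)
    moreover have "y \<bullet> y = (norm y)^2" by (simp add: power2_norm_eq_inner)
    ultimately show ?thesis using False
      by (simp add: field_simps)
  qed
  define w where "w = l *\<^sub>R v - M *v v"
  have wU: "w \<in> U" unfolding w_def using U vU inv by (simp add: subspace_diff subspace_scale)
  have "t^2 * (w \<bullet> (M *v w) - l * (w \<bullet> w)) \<le> 2 * t * (w \<bullet> w)" for t
  proof -
    have "v + t *\<^sub>R w \<in> U" using U vU wU by (simp add: subspace_add subspace_scale)
    from ray[OF this] have "(v + t *\<^sub>R w) \<bullet> (M *v (v + t *\<^sub>R w)) \<le> l * ((v + t *\<^sub>R w) \<bullet> (v + t *\<^sub>R w))" .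
    moreover have "(v + t *\<^sub>R w) \<bullet> (M *v (v + t *\<^sub>R w)) = l + 2 * t * (w \<bullet> (M *v v)) + t^2 * (w \<bullet> (M *v w))"
    proof -
      have h1: "v \<bullet> (M *v w) = w \<bullet> (M *v v)" using sym_dot[OF sym, of v w] by (simp add: inner_commute)
      show ?thesis
        by (simp add: matrix_vector_right_distrib matrix_vector_mult_scaleR inner_add_left inner_add_right h1
           l_def power2_eq_square algebra_simps)
    qed
    moreover have "(v + t *\<^sub>R w) \<bullet> (v + t *\<^sub>R w) = 1 + 2 * t * (v \<bullet> w) + t^2 * (w \<bullet> w)"
      using vv by (simp add: inner_add_left inner_add_right power2_eq_square algebra_simps inner_commute)
    moreover have "w \<bullet> (M *v v) - l * (v \<bullet> w) = - (w \<bullet> w)"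
      by (simp add: w_def inner_diff_left inner_diff_right algebra_simps inner_commute)
    ultimately show ?thesis by (rule arith_aux)
  qed
  then have "w \<bullet> w = 0" by (intro quad_zero) auto
  then have "M *v v = l *\<^sub>R v" by (simp add: w_def)
  then show ?thesis using vU nv by blast
qed


lemma eigbasis_sub:
  fixes M :: "real^'n^'n"
  assumes sym: "sym_mat M"
  shows "subspace U \<Longrightarrow> (\<forall>x\<in>U. M *v x \<in> U) \<Longrightarrow> \<exists>B. B \<subseteq> U \<and> pairwise orthogonal B \<and>
     (\<forall>b\<in>B. norm b = 1) \<and> (\<forall>b\<in>B. \<exists>l. M *v b = l *\<^sub>R b) \<and> span B = U"
proof (induction "dim U" arbitrary: U rule: less_induct)
  case less
  show ?case
  proof (cases "U = {0}")
    case True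
    then show ?thesis by (intro exI[of _ "{}"]) auto
  next
    case False
    obtain v l where vU: "v \<in> U" and nv: "norm v = 1" and Mv: "M *v v = l *\<^sub>R v"
      using eig_exists[OF sym less.prems(1) _ False] less.prems(2) by blast
    have vv: "v \<bullet> v = 1" using nv by (simp add: norm_eq_1)
    define U' where "U' = {x\<in>U. v \<bullet> x = 0}"
    have sU': "subspace U'" using less.prems(1)
      unfolding U'_def subspace_def by (auto simp: inner_add_right)
    have invU': "\<forall>x\<in>U'. M *v x \<in> U'"
    proof
      fix x assume x: "x \<in> U'"
      have "v \<bullet> (M *v x) = (M *v v) \<bullet> x" using sym_dot[OF sym, of v x] by simp
      also have "\<dots> = 0" using x by (simp add: Mv U'_def)
      finally show "M *v x \<in> U'" using x less.prems(2) by (simp add: U'_def)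
    qed
    have "v \<notin> U'" using vv by (simp add: U'_def)
    moreover have "U' \<subseteq> U" by (auto simp: U'_def)
    ultimately have "U' \<subset> U" using vU by blast
    then have "dim U' < dim U"
      using sU' less.prems(1) by (metis dim_psubset span_eq_iff)
    from less.hyps[OF this sU' invU'] obtain B' where B': "B' \<subseteq> U'" "pairwise orthogonal B'"
      "\<forall>b\<in>B'. norm b = 1" "\<forall>b\<in>B'. \<exists>l. M *v b = l *\<^sub>R b" "span B' = U'" by blast
    show ?thesis
    proof (intro exI[of _ "insert v B'"] conjI)
      show "insert v B' \<subseteq> U" using vU B'(1) by (auto simp: U'_def)
      show "pairwise orthogonal (insert v B')"
        using B'(1,2) by (auto simp: pairwise_insert orthogonal_def U'_def inner_commute)
      show "\<forall>b\<in>insert v B'. norm b = 1" using nv B'(3) by auto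
      show "\<forall>b\<in>insert v B'. \<exists>l. M *v b = l *\<^sub>R b" using Mv B'(4) by auto
      show "span (insert v B') = U"
      proof
        show "span (insert v B') \<subseteq> U"
          using \<open>insert v B' \<subseteq> U\<close> less.prems(1) by (simp add: span_minimal)
        show "U \<subseteq> span (insert v B')"
        proof
          fix x assume x: "x \<in> U"
          have "x - (v \<bullet> x) *\<^sub>R v \<in> U'" using x vU vv less.prems(1)
            by (simp add: U'_def subspace_diff subspace_scale inner_diff_right)
          then have "x - (v \<bullet> x) *\<^sub>R v \<in> span (insert v B')"
            using B'(5) span_mono[of B' "insert v B'"] by auto
          moreover have "(v \<bullet> x) *\<^sub>R v \<in> span (insert v B')"
            by (simp add: span_base span_scale)
          ultimately have "x - (v \<bullet> x) *\<^sub>R v + (v \<bullet> x) *\<^sub>R v \<in> span (insert v B')"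
            by (rule span_add)
          then show "x \<in> span (insert v B')" by simp
        qed
      qed
    qed
  qed
qed

lemma sym_eigbasis:
  fixes M :: "real^'n^'n"
  assumes sym: "sym_mat M"
  obtains B \<mu> where "finite B" "pairwise orthogonal B" "\<And>b. b \<in> B \<Longrightarrow> norm b = 1"
    "\<And>b. b \<in> B \<Longrightarrow> M *v b = \<mu> b *\<^sub>R b" "span B = UNIV"
proof -
  obtain B where B: "pairwise orthogonal B" "\<forall>b\<in>B. norm b = 1" "\<forall>b\<in>B. \<exists>l. M *v b = l *\<^sub>R b" "span B = UNIV"
    using eigbasis_sub[OF sym, of UNIV] by auto
  from B(3) obtain \<mu> where "\<forall>b\<in>B. M *v b = \<mu> b *\<^sub>R b" by metis
  then show ?thesis using that B pairwise_orthogonal_imp_finite by blast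
qed

lemma ortho_coef:
  assumes "finite B" "pairwise orthogonal B" "\<And>b. b \<in> B \<Longrightarrow> norm b = 1" "b \<in> B"
  shows "b \<bullet> (\<Sum>b'\<in>B. f b' *\<^sub>R b') = f b"
proof -
  have "b \<bullet> (\<Sum>b'\<in>B. f b' *\<^sub>R b') = (\<Sum>b'\<in>B. f b' * (b \<bullet> b'))" by (simp add: inner_sum_right)
  also have "\<dots> = f b * (b \<bullet> b) + (\<Sum>b'\<in>B - {b}. f b' * (b \<bullet> b'))"
    using assms(1,4) by (simp add: sum.remove)
  also have "(\<Sum>b'\<in>B - {b}. f b' * (b \<bullet> b')) = 0"
    using assms(2,4) by (intro sum.neutral) (auto simp: pairwise_def orthogonal_def)
  also have "b \<bullet> b = 1" using assms(3)[OF assms(4)] by (simp add: norm_eq_1)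
  finally show ?thesis by simp
qed

lemma mat_eq_on_span:
  fixes A C :: "real^'n^'n"
  assumes "span B = UNIV" "\<And>b. b \<in> B \<Longrightarrow> A *v b = C *v b"
  shows "A = C"
proof -
  have "A *v x = C *v x" for x
    using real_vector.linear_eq_on_span[OF matrix_vector_mul_linear matrix_vector_mul_linear, of B A C x] assms by auto
  then show ?thesis by (simp add: matrix_eq)
qed

lemma sym_from_dot:
  fixes S :: "real^'n^'n"
  assumes "\<And>x y. (S *v x) \<bullet> y = x \<bullet> (S *v y)"
  shows "sym_mat S"
proof -
  have "transpose S *v x = S *v x" for x
  proof -
    define d where "d = transpose S *v x - S *v x"
    have "(transpose S *v x) \<bullet> d = x \<bullet> (S *v d)"
      by (simp add: transpose_matrix_vector dot_lmul_matrix)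
    also have "\<dots> = (S *v x) \<bullet> d" using assms by simp
    finally have "d \<bullet> d = 0" by (simp add: d_def inner_diff_left)
    then show ?thesis by (simp add: d_def)
  qed
  then show ?thesis by (simp add: sym_mat_def matrix_eq)
qed

lemma pos_def_sqrt:
  fixes M :: "real^'n^'n"
  assumes pd: "pos_def M"
  shows "sym_mat (mat_sqrt M) \<and> mat_sqrt M ** mat_sqrt M = M"
proof -
  have sym: "sym_mat M" using pd by (simp add: pos_def_def)
  obtain B \<mu> where B: "finite B" "pairwise orthogonal B" "\<And>b. b \<in> B \<Longrightarrow> norm b = 1"
    "\<And>b. b \<in> B \<Longrightarrow> M *v b = \<mu> b *\<^sub>R b" "span B = UNIV"
    using sym_eigbasis[OF sym] by metis
  have bb: "b \<bullet> b = 1" if "b \<in> B" for b using B(3)[OF that] by (simp add: norm_eq_1)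
  have mupos: "\<mu> b > 0" if b: "b \<in> B" for b
  proof -
    have "b \<noteq> 0" using B(3)[OF b] by auto
    then have "b \<bullet> (M *v b) > 0" using pd by (simp add: pos_def_def)
    then show ?thesis using B(4)[OF b] bb[OF b] by simp
  qed
  have expand: "x = (\<Sum>b\<in>B. (x \<bullet> b) *\<^sub>R b)" for x
    using orthonormal_basis_expand[OF B(2) B(3), of x] B(1,5) by simp
  define f where "f x = (\<Sum>b\<in>B. (sqrt (\<mu> b) * (x \<bullet> b)) *\<^sub>R b)" for x
  have lin: "linear f"
    by (rule linearI) (simp_all add: f_def inner_add_left scaleR_add_left sum.distrib algebra_simps scaleR_sum_right)
  define S where "S = matrix f"
  have Sx: "S *v x = f x" for x using lin by (simp add: S_def matrix_works)
  have Sb: "S *v b = sqrt (\<mu> b) *\<^sub>R b" if b: "b \<in> B" for b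
  proof -
    have "b' \<bullet> (S *v b) = b' \<bullet> (sqrt (\<mu> b) *\<^sub>R b)" if b': "b' \<in> B" for b'
    proof -
      have "b' \<bullet> (S *v b) = sqrt (\<mu> b') * (b \<bullet> b')"
        unfolding Sx f_def by (rule ortho_coef[OF B(1,2,3) b'])
      also have "\<dots> = b' \<bullet> (sqrt (\<mu> b) *\<^sub>R b)"
        using b b' B(2) bb by (cases "b = b'") (auto simp: pairwise_def orthogonal_def inner_commute)
      finally show ?thesis .
    qed
    then show ?thesis using expand[of "S *v b"] expand[of "sqrt (\<mu> b) *\<^sub>R b"]
      by (metis (no_types, lifting) inner_commute sum.cong)
  qed
  have symS: "sym_mat S"
  proof (rule sym_from_dot)
    fix x y
    show "(S *v x) \<bullet> y = x \<bullet> (S *v y)"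
      by (simp add: Sx f_def inner_sum_left inner_sum_right algebra_simps inner_commute)
  qed
  have pdS: "pos_def S"
  proof -
    have "x \<bullet> (S *v x) > 0" if x: "x \<noteq> 0" for x
    proof -
      have eq: "x \<bullet> (S *v x) = (\<Sum>b\<in>B. sqrt (\<mu> b) * (x \<bullet> b)^2)"
        by (simp add: Sx f_def inner_sum_right power2_eq_square algebra_simps inner_commute)
      obtain b where b: "b \<in> B" "x \<bullet> b \<noteq> 0"
      proof (rule ccontr)
        assume "\<not> thesis"
        then have "\<forall>b\<in>B. x \<bullet> b = 0" using that by blast
        then have "x = 0" using expand[of x] by simp
        then show False using x by simp
      qed
      have "0 < sqrt (\<mu> b) * (x \<bullet> b)^2" using mupos[OF b(1)] b(2) by simp
      also have "\<dots> \<le> (\<Sum>b\<in>B. sqrt (\<mu> b) * (x \<bullet> b)^2)"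
      proof (rule member_le_sum)
        fix y assume "y \<in> B - {b}"
        then have "\<mu> y > 0" using mupos by auto
        then show "0 \<le> sqrt (\<mu> y) * (x \<bullet> y)^2" by simp
      qed (use B(1) b(1) in auto)
      finally show ?thesis using eq by simp
    qed
    then show ?thesis using symS by (simp add: pos_def_def)
  qed
  have SS: "S ** S = M"
  proof (rule mat_eq_on_span[OF B(5)])
    fix b assume b: "b \<in> B"
    have "(S ** S) *v b = S *v (S *v b)" by (simp add: matrix_vector_mul_assoc)
    also have "\<dots> = \<mu> b *\<^sub>R b" using b mupos[OF b] by (simp add: Sb matrix_vector_mult_scaleR)
    finally show "(S ** S) *v b = M *v b" using B(4)[OF b] by simp
  qed
  have uniq: "T = S" if T: "pos_def T" "T ** T = M" for T
  proof (rule mat_eq_on_span[OF B(5)])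
    fix b assume b: "b \<in> B"
    define c where "c = sqrt (\<mu> b)"
    have c: "c > 0" "c * c = \<mu> b" using mupos[OF b] by (simp_all add: c_def)
    define w where "w = T *v b - c *\<^sub>R b"
    have "T *v w + c *\<^sub>R w = T *v (T *v b) - (c * c) *\<^sub>R b"
      by (simp add: w_def matrix_vector_mult_diff_distrib matrix_vector_mult_scaleR algebra_simps)
    also have "T *v (T *v b) = M *v b" using T(2) by (simp add: matrix_vector_mul_assoc)
    finally have "T *v w + c *\<^sub>R w = 0" using B(4)[OF b] c(2) by simp
    then have "T *v w = - c *\<^sub>R w"
    proof -
      assume h: "T *v w + c *\<^sub>R w = 0"
      have "T *v w = (T *v w + c *\<^sub>R w) - c *\<^sub>R w" by simp
      also have "\<dots> = - c *\<^sub>R w" unfolding h by simp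
      finally show ?thesis .
    qed
    then have "w \<bullet> (T *v w) = - c * (w \<bullet> w)" by simp
    moreover have "w \<bullet> w \<ge> 0" by simp
    moreover have "c * (w \<bullet> w) \<ge> 0" using c(1) by simp
    ultimately have "\<not> w \<bullet> (T *v w) > 0" by simp
    then have "w = 0" using T(1) unfolding pos_def_def by blast
    then show "T *v b = S *v b" using b by (simp add: w_def Sb c_def)
  qed
  have "mat_sqrt M = S" unfolding mat_sqrt_def
    using pdS SS uniq by (intro the_equality) blast+
  then show ?thesis using symS SS by simp
qed

lemma max_eig_bound:
  fixes M :: "real^'n^'n"
  assumes pd: "pos_def M"
  shows "x \<bullet> (M *v x) \<le> max_eig M * (x \<bullet> x)" and "max_eig M > 0"
proof -
  have sym: "sym_mat M" using pd by (simp add: pos_def_def)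
  obtain B \<mu> where B: "finite B" "pairwise orthogonal B" "\<And>b. b \<in> B \<Longrightarrow> norm b = 1"
    "\<And>b. b \<in> B \<Longrightarrow> M *v b = \<mu> b *\<^sub>R b" "span B = UNIV"
    using sym_eigbasis[OF sym] by metis
  have bb: "b \<bullet> b = 1" if "b \<in> B" for b using B(3)[OF that] by (simp add: norm_eq_1)
  have expand: "x = (\<Sum>b\<in>B. (x \<bullet> b) *\<^sub>R b)" for x
    using orthonormal_basis_expand[OF B(2) B(3), of x] B(1,5) by simp
  define E where "E = {l. \<exists>v. v \<noteq> 0 \<and> M *v v = l *\<^sub>R v}"
  have EB: "E \<subseteq> \<mu> ` B"
  proof
    fix l assume "l \<in> E"
    then obtain v where v: "v \<noteq> 0" "M *v v = l *\<^sub>R v" by (auto simp: E_def)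
    obtain b where b: "b \<in> B" "v \<bullet> b \<noteq> 0"
    proof (rule ccontr)
      assume "\<not> thesis"
      then have "\<forall>b\<in>B. v \<bullet> b = 0" using that by blast
      then have "v = 0" using expand[of v] by simp
      then show False using v by simp
    qed
    have "l * (v \<bullet> b) = (M *v v) \<bullet> b" using v(2) by simp
    also have "\<dots> = v \<bullet> (M *v b)" by (rule sym_dot[OF sym])
    also have "\<dots> = \<mu> b * (v \<bullet> b)" using B(4)[OF b(1)] by simp
    finally have "l = \<mu> b" using b(2) by simp
    then show "l \<in> \<mu> ` B" using b(1) by blast
  qed
  have finE: "finite E" using EB B(1) finite_surj by blast
  have muE: "\<mu> b \<in> E" if b: "b \<in> B" for b
    using B(3)[OF b] B(4)[OF b] unfolding E_def by (intro CollectI exI[of _ b]) auto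
  have mule: "\<mu> b \<le> max_eig M" if b: "b \<in> B" for b
    unfolding max_eig_def E_def[symmetric] using finE muE[OF b] by simp
  have mupos: "\<mu> b > 0" if b: "b \<in> B" for b
  proof -
    have "b \<noteq> 0" using B(3)[OF b] by auto
    then have "b \<bullet> (M *v b) > 0" using pd by (simp add: pos_def_def)
    then show ?thesis using B(4)[OF b] bb[OF b] by simp
  qed
  have "B \<noteq> {}"
  proof
    assume "B = {}"
    then have "(axis undefined 1 :: real^'n) = 0" using expand[of "axis undefined 1"] by simp
    then show False by (simp add: axis_eq_0_iff)
  qed
  then obtain b0 where "b0 \<in> B" by blast
  then show "max_eig M > 0" using mule mupos by fastforce
  have "M *v x = (\<Sum>b\<in>B. (x \<bullet> b) *\<^sub>R (M *v b))"
    by (subst expand) (simp add: vec.sum matrix_vector_mult_scaleR)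
  then have "x \<bullet> (M *v x) = (\<Sum>b\<in>B. \<mu> b * (x \<bullet> b)^2)"
    using B(4) by (simp add: inner_sum_right power2_eq_square algebra_simps inner_commute)
  also have "\<dots> \<le> (\<Sum>b\<in>B. max_eig M * (x \<bullet> b)^2)"
    by (intro sum_mono mult_right_mono mule) auto
  also have "\<dots> = max_eig M * (x \<bullet> x)"
  proof -
    have "x \<bullet> x = x \<bullet> (\<Sum>b\<in>B. (x \<bullet> b) *\<^sub>R b)" using expand[of x] by simp
    also have "\<dots> = (\<Sum>b\<in>B. (x \<bullet> b)^2)" by (simp add: inner_sum_right power2_eq_square)
    finally show ?thesis by (simp add: sum_distrib_left)
  qed
  finally show "x \<bullet> (M *v x) \<le> max_eig M * (x \<bullet> x)" .
qed

lemma cmp: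
  fixes W W' :: "real \<Rightarrow> real"
  assumes ab: "a \<le> b" and cont: "continuous_on {a..b} W"
    and der: "\<And>t. a < t \<Longrightarrow> t < b \<Longrightarrow> (W has_real_derivative W' t) (at t)"
    and neg: "\<And>t. a < t \<Longrightarrow> t < b \<Longrightarrow> W t > m \<Longrightarrow> W' t \<le> 0"
    and Wa: "W a \<le> m"
  shows "W b \<le> m"
proof (rule ccontr)
  assume nb: "\<not> W b \<le> m"
  define T where "T = {a..b} \<inter> W -` {..m}"
  have cT: "closed T" unfolding T_def by (rule continuous_closed_preimage[OF cont]) auto
  have aT: "a \<in> T" using ab Wa by (simp add: T_def)
  have bdd: "bdd_above T" by (rule bdd_aboveI[of _ b]) (auto simp: T_def)
  define t0 where "t0 = Sup T"
  have t0T: "t0 \<in> T" unfolding t0_def using closed_contains_Sup[OF _ bdd cT] aT by blast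
  have t0b: "t0 < b" using t0T nb by (auto simp: T_def less_le)
  have at0: "a \<le> t0" using t0T by (auto simp: T_def)
  have above: "W t > m" if "t0 < t" "t \<le> b" for t
  proof (rule ccontr)
    assume "\<not> W t > m"
    then have "t \<in> T" using that at0 by (auto simp: T_def)
    then have "t \<le> t0" unfolding t0_def using bdd by (rule cSup_upper)
    then show False using that by simp
  qed
  have cont2: "continuous_on {t0..b} W" by (rule continuous_on_subset[OF cont]) (use at0 in auto)
  have "W differentiable at x" if "t0 < x" "x < b" for x
    using der[of x] that at0 unfolding real_differentiable_def by auto
  then obtain l z where z: "t0 < z" "z < b" "(W has_real_derivative l) (at z)" "W b - W t0 = (b - t0) * l"
    using MVT[OF t0b cont2] by blast
  have "l = W' z" using DERIV_unique[OF z(3) der] z at0 by simp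
  then have "l \<le> 0" using neg[of z] above[of z] z at0 by simp
  moreover have "b - t0 \<ge> 0" using t0b by simp
  ultimately have "(b - t0) * l \<le> 0" by (simp add: mult_nonneg_nonpos)
  then have "W b \<le> W t0" using z(4) by simp
  moreover have "W t0 \<le> m" using t0T by (simp add: T_def)
  ultimately show False using nb by simp
qed

lemma quad_deriv:
  fixes M :: "real^'n^'n"
  assumes sym: "sym_mat M" and e: "(e has_vector_derivative e') (at t within S)"
  shows "((\<lambda>t. e t \<bullet> (M *v e t)) has_real_derivative 2 * (e t \<bullet> (M *v e'))) (at t within S)"
proof -
  have Me: "((\<lambda>t. M *v e t) has_vector_derivative M *v e') (at t within S)"
    by (rule bounded_linear.has_vector_derivative[OF matrix_vector_mul_bounded_linear e])
  have "((\<lambda>t. e t \<bullet> (M *v e t)) has_vector_derivative e t \<bullet> (M *v e') + e' \<bullet> (M *v e t)) (at t within S)"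
    by (rule bounded_bilinear.has_vector_derivative[OF bounded_bilinear_inner e Me])
  moreover have "e' \<bullet> (M *v e t) = e t \<bullet> (M *v e')"
    using sym_dot[OF sym, of "e t" e'] by (simp add: inner_commute)
  ultimately show ?thesis by (simp add: has_real_derivative_iff_has_vector_derivative)
qed

lemma err_alg:
  fixes A1 :: "real^'n1^'n1" and B1 :: "real^'p1^'n1" and A2 :: "real^'n2^'n2" and B2 :: "real^'p2^'n2"
    and K :: "real^'n1^'p1" and P :: "real^'n2^'n1" and Q :: "real^'n2^'p1" and R :: "real^'p2^'p1"
  assumes PQ: "P ** A2 = A1 ** P + B1 ** Q"
  shows "A1 *v x1 + B1 *v (R *v w + Q *v x2 + K *v (x1 - P *v x2)) - P *v (A2 *v x2 + B2 *v w)
     = (A1 + B1 ** K) *v (x1 - P *v x2) + (B1 ** R - P ** B2) *v w"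
proof -
  have h: "P *v (A2 *v x2) = A1 *v (P *v x2) + B1 *v (Q *v x2)"
    by (metis PQ matrix_vector_mul_assoc matrix_vector_mult_add_rdistrib)
  show ?thesis
    by (simp add: h matrix_vector_right_distrib matrix_vector_mult_diff_distrib matrix_vector_mult_add_rdistrib
       matrix_vector_mult_diff_rdistrib matrix_vector_mul_assoc[symmetric] algebra_simps)
qed
theorem proposition1:
  fixes A1 :: "real^'n1^'n1" and B1 :: "real^'p1^'n1" and C1 :: "real^'n1^'m"
    and A2 :: "real^'n2^'n2" and B2 :: "real^'p2^'n2" and C2 :: "real^'n2^'m"
    and K :: "real^'n1^'p1" and M :: "real^'n1^'n1" and lam :: real
    and P :: "real^'n2^'n1" and Q :: "real^'n2^'p1" and R :: "real^'p2^'p1"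
    and u2 :: "real \<Rightarrow> real^'p2" and x2 :: "real \<Rightarrow> real^'n2"
    and x1 :: "real \<Rightarrow> real^'n1" and Bd :: "real^'n1" and bmax :: real
    and ti :: real and x1m :: "real^'n1"
  defines "V \<equiv> \<lambda>(a::real^'n1) (b::real^'n2). sqrt ((a - P *v b) \<bullet> (M *v (a - P *v b)))"
    and "uV \<equiv> \<lambda>(w::real^'p2) (a::real^'n1) (b::real^'n2). R *v w + Q *v b + K *v (a - P *v b)"
    and "\<gamma> \<equiv> \<lambda>\<nu>::real. mat_norm (mat_sqrt M ** (B1 ** R - P ** B2)) / lam * \<nu>"
  assumes hurw: "hurwitz (A1 + B1 ** K)"
    and Mpd: "pos_def M" and lam_pos: "lam > 0"
    and MC: "loewner_le (transpose C1 ** C1) M"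
    and lyap: "loewner_le (transpose (A1 + B1 ** K) ** M + M ** (A1 + B1 ** K)) ((-2 * lam) *\<^sub>R M)"
    and PQ: "P ** A2 = A1 ** P + B1 ** Q" and CP: "C2 = C1 ** P"
    and u2_smooth: "smooth_nonneg u2" and u2_bdd: "bounded (u2 ` {0..})"
    and x2_ode: "\<And>t. t \<ge> 0 \<Longrightarrow>
        (x2 has_vector_derivative (A2 *v x2 t + B2 *v u2 t)) (at t within {0..})"
    and ti_pos: "ti > 0" and Bd_bound: "norm Bd < bmax"
    and x1_before: "\<And>t. t \<in> {0..<ti} \<Longrightarrow>
        (x1 has_vector_derivative (A1 *v x1 t + B1 *v uV (u2 t) (x1 t) (x2 t))) (at t within {0..<ti})"
    and x1_after: "\<And>t. t > ti \<Longrightarrow>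
        (x1 has_vector_derivative (A1 *v x1 t + B1 *v uV (u2 t) (x1 t) (x2 t))) (at t)"
    and x1_left: "(x1 \<longlongrightarrow> x1m) (at_left ti)"
    and x1_right: "(x1 \<longlongrightarrow> x1m + Bd) (at_right ti)"
  shows "(\<forall>t. t \<ge> 0 \<and> t \<noteq> ti \<longrightarrow>
            norm (C1 *v x1 t - C2 *v x2 t)
              \<le> max (V (x1 0) (x2 0)) (\<gamma> (sup_norm u2)) + bmax * sqrt (max_eig M))
       \<and> norm (C1 *v x1m - C2 *v x2 ti)
              \<le> max (V (x1 0) (x2 0)) (\<gamma> (sup_norm u2)) + bmax * sqrt (max_eig M)
       \<and> norm (C1 *v (x1m + Bd) - C2 *v x2 ti)
              \<le> max (V (x1 0) (x2 0)) (\<gamma> (sup_norm u2)) + bmax * sqrt (max_eig M)"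
proof -
  define F where "F = A1 + B1 ** K"
  define G where "G = B1 ** R - P ** B2"
  define SM where "SM = mat_sqrt M"
  define c where "c = mat_norm (SM ** G)"
  define U where "U = sup_norm u2"
  define g where "g = c / lam * U"
  define q where "q v = v \<bullet> (M *v v)" for v :: "real^'n1"
  define e where "e t = x1 t - P *v x2 t" for t
  define W where "W t = q (e t)" for t
  define D where "D t = 2 * (e t \<bullet> (M *v (F *v e t + G *v u2 t)))" for t
  have symM: "sym_mat M" using Mpd by (simp add: pos_def_def)
  have SMp: "sym_mat SM" "SM ** SM = M" using pos_def_sqrt[OF Mpd] by (simp_all add: SM_def)
  have SMdot: "(SM *v x) \<bullet> (SM *v y) = x \<bullet> (M *v y)" for x y
  proof -
    have "(SM *v x) \<bullet> (SM *v y) = x \<bullet> (SM *v (SM *v y))" by (rule sym_dot[OF SMp(1)])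
    also have "\<dots> = x \<bullet> (M *v y)" using SMp(2) by (simp add: matrix_vector_mul_assoc)
    finally show ?thesis .
  qed
  have SMnorm: "norm (SM *v x) = sqrt (q x)" for x
    by (simp add: norm_eq_sqrt_inner SMdot q_def)
  have q_nonneg: "q x \<ge> 0" for x
    using SMdot[of x x] inner_ge_zero[of "SM *v x"] by (simp add: q_def[symmetric])
  have c_nonneg: "c \<ge> 0"
    unfolding c_def mat_norm_def by (rule onorm_pos_le[OF matrix_vector_mul_bounded_linear])
  have bddU: "bdd_above ((\<lambda>t. norm (u2 t)) ` {0..})"
  proof -
    obtain a where "\<forall>x\<in>u2 ` {0..}. norm x \<le> a" using u2_bdd by (auto simp: bounded_iff)
    then show ?thesis by (intro bdd_aboveI[of _ a]) auto
  qed
  have u_bound: "norm (u2 t) \<le> U" if "t \<ge> 0" for t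
    unfolding U_def sup_norm_def using that bddU by (intro cSUP_upper) auto
  have U_nonneg: "U \<ge> 0" using u_bound[of 0] norm_ge_zero[of "u2 0"] by linarith
  have g_nonneg: "g \<ge> 0" using c_nonneg U_nonneg lam_pos by (simp add: g_def)
  have Cbound: "norm (C1 *v x) \<le> sqrt (q x)" for x
  proof -
    have "x \<bullet> ((transpose C1 ** C1) *v x) = x \<bullet> (transpose C1 *v (C1 *v x))"
      by (simp add: matrix_vector_mul_assoc)
    also have "\<dots> = x \<bullet> ((C1 *v x) v* C1)" by (simp add: transpose_matrix_vector)
    also have "\<dots> = ((C1 *v x) v* C1) \<bullet> x" by (rule inner_commute)
    also have "\<dots> = (C1 *v x) \<bullet> (C1 *v x)" by (rule dot_lmul_matrix)
    finally have "(C1 *v x) \<bullet> (C1 *v x) = x \<bullet> ((transpose C1 ** C1) *v x)" by simp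
    also have "\<dots> \<le> q x" using MC by (simp add: loewner_le_def q_def)
    finally have "(norm (C1 *v x))^2 \<le> q x" by (simp add: power2_norm_eq_inner)
    then show ?thesis by (rule real_le_rsqrt)
  qed
  have diffC: "C1 *v x1 t - C2 *v x2 t = C1 *v e t" for t
    by (simp add: e_def CP matrix_vector_mult_diff_distrib matrix_vector_mul_assoc)
  have alg: "A1 *v x1 t + B1 *v uV (u2 t) (x1 t) (x2 t) - P *v (A2 *v x2 t + B2 *v u2 t)
      = F *v e t + G *v u2 t" for t
    unfolding uV_def e_def F_def G_def by (rule err_alg[OF PQ])
  have dW: "D t \<le> -2 * lam * W t + 2 * lam * g * sqrt (W t)" if t: "t \<ge> 0" for t
  proof -
    define x where "x = e t"
    have l1: "x \<bullet> (M *v (F *v x)) \<le> - lam * q x"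
    proof -
      have "x \<bullet> ((transpose F ** M + M ** F) *v x) \<le> x \<bullet> (((-2 * lam) *\<^sub>R M) *v x)"
        using lyap by (simp add: loewner_le_def F_def)
      moreover have "x \<bullet> ((transpose F ** M + M ** F) *v x) = 2 * (x \<bullet> (M *v (F *v x)))"
      proof -
        have "x \<bullet> (transpose F *v (M *v x)) = x \<bullet> ((M *v x) v* F)" by (simp add: transpose_matrix_vector)
        also have "\<dots> = ((M *v x) v* F) \<bullet> x" by (rule inner_commute)
        also have "\<dots> = (M *v x) \<bullet> (F *v x)" by (rule dot_lmul_matrix)
        also have "\<dots> = (F *v x) \<bullet> (M *v x)" by (rule inner_commute)
        finally have "x \<bullet> (transpose F *v (M *v x)) = (F *v x) \<bullet> (M *v x)" .
        also have "\<dots> = x \<bullet> (M *v (F *v x))"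
          using sym_dot[OF symM, of "F *v x" x] by (simp add: inner_commute)
        finally show ?thesis
          by (simp add: matrix_vector_mult_add_rdistrib matrix_vector_mul_assoc[symmetric] inner_add_right)
      qed
      moreover have "x \<bullet> (((-2 * lam) *\<^sub>R M) *v x) = -2 * lam * q x"
        by (simp only: scaleR_matrix_vector_assoc[symmetric] inner_scaleR_right q_def)
      ultimately show ?thesis by simp
    qed
    have l2: "x \<bullet> (M *v (G *v u2 t)) \<le> sqrt (q x) * (c * U)"
    proof -
      have "x \<bullet> (M *v (G *v u2 t)) = (SM *v x) \<bullet> (SM *v (G *v u2 t))" by (simp add: SMdot)
      also have "\<dots> \<le> norm (SM *v x) * norm (SM *v (G *v u2 t))" by (rule norm_cauchy_schwarz)
      also have "norm (SM *v (G *v u2 t)) \<le> c * U"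
      proof -
        have "norm (SM *v (G *v u2 t)) = norm ((SM ** G) *v u2 t)" by (simp add: matrix_vector_mul_assoc)
        also have "\<dots> \<le> c * norm (u2 t)"
          unfolding c_def mat_norm_def by (rule onorm[OF matrix_vector_mul_bounded_linear])
        also have "\<dots> \<le> c * U" using u_bound[OF t] c_nonneg by (simp add: mult_left_mono)
        finally show ?thesis .
      qed
      then have "norm (SM *v x) * norm (SM *v (G *v u2 t)) \<le> norm (SM *v x) * (c * U)"
        by (simp add: mult_left_mono)
      finally show ?thesis by (simp add: SMnorm)
    qed
    have "c * U = lam * g" using lam_pos by (simp add: g_def)
    then show ?thesis using l1 l2
      by (simp add: D_def W_def x_def[symmetric] matrix_vector_right_distrib inner_add_right algebra_simps)
  qed
  have Dneg: "D t \<le> 0" if "t \<ge> 0" "W t > g^2" for t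
  proof -
    have sW: "sqrt (W t) > g" using that(2) g_nonneg by (simp add: real_less_rsqrt)
    have "-2 * lam * W t + 2 * lam * g * sqrt (W t) = 2 * lam * sqrt (W t) * (g - sqrt (W t))"
      using q_nonneg[of "e t"] by (simp add: W_def algebra_simps)
    also have "\<dots> \<le> 0"
    proof (rule mult_nonneg_nonpos)
      have "0 \<le> sqrt (W t)" using sW g_nonneg by linarith
      then show "0 \<le> 2 * lam * sqrt (W t)" using lam_pos by simp
      show "g - sqrt (W t) \<le> 0" using sW by simp
    qed
    finally show ?thesis using dW[OF that(1)] by simp
  qed
  have qcont: "isCont q v" for v
    unfolding q_def by (intro continuous_intros linear_continuous_at matrix_vector_mul_linear)
  have de1: "(e has_vector_derivative (F *v e s + G *v u2 s)) (at s within {0..<ti})" if s: "s \<in> {0..<ti}" for s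
  proof -
    have x2d: "(x2 has_vector_derivative (A2 *v x2 s + B2 *v u2 s)) (at s within {0..<ti})"
      by (rule has_vector_derivative_within_subset[OF x2_ode]) (use s in auto)
    have "(e has_vector_derivative (A1 *v x1 s + B1 *v uV (u2 s) (x1 s) (x2 s)) - P *v (A2 *v x2 s + B2 *v u2 s))
        (at s within {0..<ti})"
      unfolding e_def
      by (intro has_vector_derivative_diff x1_before[OF s]
          bounded_linear.has_vector_derivative[OF matrix_vector_mul_bounded_linear x2d])
    then show ?thesis by (simp only: alg)
  qed
  have de2: "(e has_vector_derivative (F *v e s + G *v u2 s)) (at s)" if s: "s > ti" for s
  proof -
    have "at s within {0..} = at s" using s ti_pos by (intro at_within_interior) (simp add: interior_real_atLeast)
    then have x2d: "(x2 has_vector_derivative (A2 *v x2 s + B2 *v u2 s)) (at s)"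
      using x2_ode[of s] s ti_pos by simp
    have "(e has_vector_derivative (A1 *v x1 s + B1 *v uV (u2 s) (x1 s) (x2 s)) - P *v (A2 *v x2 s + B2 *v u2 s))
        (at s)"
      unfolding e_def
      by (intro has_vector_derivative_diff x1_after[OF s]
          bounded_linear.has_vector_derivative[OF matrix_vector_mul_bounded_linear x2d])
    then show ?thesis by (simp only: alg)
  qed
  have dW1: "(W has_real_derivative D s) (at s within {0..<ti})" if s: "s \<in> {0..<ti}" for s
    unfolding W_def q_def D_def by (rule quad_deriv[OF symM de1[OF s]])
  have dW2: "(W has_real_derivative D s) (at s)" if s: "s > ti" for s
    unfolding W_def q_def D_def by (rule quad_deriv[OF symM de2[OF s]])
  define m1 where "m1 = max (W 0) (g^2)"
  have ph1: "W t \<le> m1" if t: "0 \<le> t" "t < ti" for t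
  proof (cases "t = 0")
    case True then show ?thesis by (simp add: m1_def)
  next
    case False
    show ?thesis
    proof (rule cmp[of 0 t W D])
      show "0 \<le> t" using t by simp
      show "continuous_on {0..t} W"
        unfolding continuous_on_eq_continuous_within
      proof
        fix s assume s: "s \<in> {0..t}"
        have "continuous (at s within {0..<ti}) W" using dW1[of s] s t by (intro DERIV_continuous) auto
        then show "continuous (at s within {0..t}) W"
          by (rule continuous_within_subset) (use t in auto)
      qed
      show "(W has_real_derivative D s) (at s)" if "0 < s" "s < t" for s
      proof -
        have "at s within {0..<ti} = at s" using that t by (intro at_within_interior) (simp add: interior_atLeastLessThan)
        then show ?thesis using dW1[of s] that t by simp
      qed
      show "D s \<le> 0" if "0 < s" "s < t" "W s > m1" for s
        using Dneg[of s] that by (simp add: m1_def)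
      show "W 0 \<le> m1" by (simp add: m1_def)
    qed
  qed
  define em where "em = x1m - P *v x2 ti"
  define ep where "ep = x1m + Bd - P *v x2 ti"
  have x2c: "(x2 \<longlongrightarrow> x2 ti) (at ti)"
  proof -
    have "at ti within {0..} = at ti" using ti_pos by (intro at_within_interior) (simp add: interior_real_atLeast)
    then have "continuous (at ti) x2" using has_vector_derivative_continuous[OF x2_ode[of ti]] ti_pos by simp
    then show ?thesis by (simp add: isCont_def)
  qed
  have em_lim: "((\<lambda>t. W t) \<longlongrightarrow> q em) (at_left ti)"
  proof -
    have "(e \<longlongrightarrow> em) (at_left ti)" unfolding e_def em_def
      by (intro tendsto_diff x1_left bounded_linear.tendsto[OF matrix_vector_mul_bounded_linear]
           tendsto_mono[OF at_le x2c]) auto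
    then show ?thesis unfolding W_def by (rule isCont_tendsto_compose[OF qcont])
  qed
  have ep_lim: "((\<lambda>t. W t) \<longlongrightarrow> q ep) (at_right ti)"
  proof -
    have "(e \<longlongrightarrow> ep) (at_right ti)" unfolding e_def ep_def
      by (intro tendsto_diff x1_right bounded_linear.tendsto[OF matrix_vector_mul_bounded_linear]
           tendsto_mono[OF at_le x2c]) auto
    then show ?thesis unfolding W_def by (rule isCont_tendsto_compose[OF qcont])
  qed
  have Wm: "q em \<le> m1"
  proof (rule tendsto_upperbound[OF em_lim])
    show "\<forall>\<^sub>F t in at_left ti. W t \<le> m1"
      using eventually_at_left_real[OF ti_pos] by eventually_elim (auto intro: ph1)
  qed simp
  define m2 where "m2 = max (q ep) (g^2)"
  have ph2: "W t \<le> m2" if t: "t > ti" for t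
  proof -
    have step: "W t \<le> max (W s) (g^2)" if s: "ti < s" "s < t" for s
    proof (rule cmp[of s t W D])
      show "s \<le> t" using s by simp
      show "continuous_on {s..t} W"
      proof (intro continuous_at_imp_continuous_on ballI)
        fix r assume "r \<in> {s..t}"
        then have "r > ti" using s by simp
        then show "isCont W r" using dW2 by (blast intro: DERIV_isCont)
      qed
      show "(W has_real_derivative D r) (at r)" if "s < r" "r < t" for r
        using dW2 that s by simp
      show "D r \<le> 0" if "s < r" "r < t" "W r > max (W s) (g^2)" for r
        using Dneg[of r] that s ti_pos by simp
    qed simp
    have lim: "((\<lambda>s. max (W s) (g^2)) \<longlongrightarrow> m2) (at_right ti)"
      unfolding m2_def by (intro tendsto_max ep_lim tendsto_const)
    show ?thesis
    proof (rule tendsto_lowerbound[OF lim])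
      show "\<forall>\<^sub>F s in at_right ti. W t \<le> max (W s) (g^2)"
        using eventually_at_right_real[OF t] by eventually_elim (auto intro: step)
    qed simp
  qed
  have sqmax: "sqrt (max a b) = max (sqrt a) (sqrt b)" for a b :: real
    by (cases "a \<le> b") (auto simp: max_def)
  have sqg: "sqrt (g^2) = g" using g_nonneg by simp
  define K0 where "K0 = max (sqrt (W 0)) g"
  define Bnd where "Bnd = K0 + bmax * sqrt (max_eig M)"
  have Veq: "V (x1 0) (x2 0) = sqrt (W 0)" by (simp add: V_def W_def q_def e_def)
  have geq: "\<gamma> (sup_norm u2) = g" by (simp add: \<gamma>_def g_def c_def SM_def G_def U_def)
  have me: "max_eig M > 0" by (rule max_eig_bound(2)[OF Mpd])
  have bpos: "bmax > 0" using Bd_bound norm_ge_zero[of Bd] by linarith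
  have hb: "bmax * sqrt (max_eig M) \<ge> 0" using me bpos by simp
  have K0B: "K0 \<le> Bnd" using hb by (simp add: Bnd_def)
  have gK0: "g \<le> K0" by (simp add: K0_def)
  have m1K0: "sqrt m1 = K0" using g_nonneg by (simp add: m1_def sqmax K0_def)
  have b1: "norm (C1 *v e t) \<le> Bnd" if "0 \<le> t" "t < ti" for t
  proof -
    have "norm (C1 *v e t) \<le> sqrt (W t)" using Cbound by (simp add: W_def)
    also have "\<dots> \<le> sqrt m1" using ph1[OF that] by simp
    finally show ?thesis using m1K0 K0B by simp
  qed
  have qem: "sqrt (q em) \<le> K0" using Wm m1K0 by (metis real_sqrt_le_iff)
  have qBd: "sqrt (q Bd) \<le> sqrt (max_eig M) * bmax"
  proof -
    have "q Bd \<le> max_eig M * (Bd \<bullet> Bd)" unfolding q_def by (rule max_eig_bound(1)[OF Mpd])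
    then have "sqrt (q Bd) \<le> sqrt (max_eig M * (norm Bd)^2)" by (simp add: power2_norm_eq_inner)
    also have "\<dots> = sqrt (max_eig M) * norm Bd" by (simp add: real_sqrt_mult)
    also have "\<dots> \<le> sqrt (max_eig M) * bmax" using Bd_bound me by (simp add: less_imp_le)
    finally show ?thesis .
  qed
  have qep: "sqrt (q ep) \<le> Bnd"
  proof -
    have "ep = em + Bd" by (simp add: ep_def em_def)
    then have "sqrt (q ep) = norm (SM *v em + SM *v Bd)" by (simp add: SMnorm[symmetric] matrix_vector_right_distrib)
    also have "\<dots> \<le> norm (SM *v em) + norm (SM *v Bd)" by (rule norm_triangle_ineq)
    also have "\<dots> = sqrt (q em) + sqrt (q Bd)" by (simp add: SMnorm)
    also have "\<dots> \<le> Bnd" using qem qBd by (simp add: Bnd_def mult.commute)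
    finally show ?thesis .
  qed
  have b2: "norm (C1 *v e t) \<le> Bnd" if "t > ti" for t
  proof -
    have "norm (C1 *v e t) \<le> sqrt (W t)" using Cbound by (simp add: W_def)
    also have "\<dots> \<le> sqrt m2" using ph2[OF that] by simp
    also have "\<dots> = max (sqrt (q ep)) g" using g_nonneg by (simp add: m2_def sqmax)
    also have "\<dots> \<le> Bnd" using qep gK0 K0B by simp
    finally show ?thesis .
  qed
  have eqm: "C1 *v x1m - C2 *v x2 ti = C1 *v em"
    by (simp add: em_def CP matrix_vector_mult_diff_distrib matrix_vector_mul_assoc)
  have eqp: "C1 *v (x1m + Bd) - C2 *v x2 ti = C1 *v ep"
    by (simp add: ep_def CP matrix_vector_mult_diff_distrib matrix_vector_mul_assoc)
  have c1: "norm (C1 *v x1 t - C2 *v x2 t) \<le> Bnd" if "t \<ge> 0" "t \<noteq> ti" for t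
  proof (cases "t < ti")
    case True then show ?thesis using b1 that diffC by simp
  next
    case False then have "t > ti" using that by simp
    then show ?thesis using b2 diffC by simp
  qed
  have c2: "norm (C1 *v x1m - C2 *v x2 ti) \<le> Bnd"
    using Cbound[of em] qem K0B eqm by simp
  have c3: "norm (C1 *v (x1m + Bd) - C2 *v x2 ti) \<le> Bnd"
    using Cbound[of ep] qep eqp by simp
  show ?thesis unfolding Veq geq using c1 c2 c3 by (simp add: Bnd_def K0_def)
qed

end
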